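(* Fix $N$, the graph $\mathcal G$, the vectors $C_1,\dots,C_N$, the attack bound $s$, and the noise bounds $b_w,b_v$. Then the following are equivalent: (i) there exists $\varepsilon>0$ such that for every $A\in\mathbb R^{n\times n}$ with $\|A\|\in[1,1+\varepsilon)$ there exist reals $\beta>0$, $\eta_0>0$ and an integer $L>\frac{\ln\|A\|}{\ln\gamma^{-1}}$ with $\eta_0(1-F(\eta_0))\ge q_0$ (where $F$ and $q_0$ are computed from these $A,\beta,L,\eta_0$); (ii) $\lambda_0>s$.
   Context: $C_i\in\mathbb R^{1\times n}$ with $\|C_i\|=1$, $i\in\mathcal V=\{1,\dots,N\}$; $\|\cdot\|$ is the Euclidean norm / induced 2-norm. $\mathcal G$ is an undirected connected graph on $\mathcal V$ without self-loops with Laplacian $\mathcal L$ (degree matrix minus adjacency matrix), whose second smallest and largest eigenvalues are $\lambda_2(\mathcal L),\lambda_{\max}(\mathcal L)$. $s$ is a nonnegative integer (upper bound on the number of attacked sensors), $b_w,b_v\ge0$. Notation: $\lambda_0=\min_{\mathcal J\subset\mathcal V,|\mathcal J|=N-s}\lambda_{\min}(\sum_{i\in\mathcal J}C_i^TC_i)$; $\gamma=\frac{\lambda_{\max}(\mathcal L)-\lambda_2(\mathcal L)}{\lambda_{\max}(\mathcal L)+\lambda_2(\mathcal L)}$; $p_0=\frac{\sqrt N\beta\gamma^L}{1-\|A\|\gamma^L}$; $k^*(\rho)=\min\{1,\frac{\beta}{\|A\|(p_0+\rho)+b_w+b_v}\}$; $F(\rho)=\|A\|(1-\frac{k^*(\rho)}{N}\lambda_0)$;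 $q_0=\frac{N-s}{N}(b_w+b_v+\|A\|p_0)+b_w+\frac{s\beta}{N}$. *)

theory Defs
  imports "HOL-Analysis.Analysis"
begin

text \<open>Real eigenvalues of a square real matrix (used only for symmetric matrices).\<close>
definition is_eig :: "real^'n^'n \<Rightarrow> real \<Rightarrow> bool" where
  "is_eig M \<mu> \<longleftrightarrow> (\<exists>v. v \<noteq> 0 \<and> M *v v = \<mu> *\<^sub>R v)"

definition min_eig :: "real^'n^'n \<Rightarrow> real" where
  "min_eig M = Min {\<mu>. is_eig M \<mu>}"

definition max_eig :: "real^'n^'n \<Rightarrow> real" where
  "max_eig M = Max {\<mu>. is_eig M \<mu>}"

definition eig_mult :: "real^'n^'n \<Rightarrow> real \<Rightarrow> nat" where
  "eig_mult M \<mu> = dim {v. M *v v = \<mu> *\<^sub>R v}"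

text \<open>Second smallest eigenvalue (counted with multiplicity) of a symmetric matrix.\<close>
definition second_eig :: "real^'n^'n \<Rightarrow> real" where
  "second_eig M = (if eig_mult M (min_eig M) \<ge> 2 then min_eig M
                   else Min ({\<mu>. is_eig M \<mu>} - {min_eig M}))"

definition laplacian :: "('v::finite \<Rightarrow> 'v \<Rightarrow> bool) \<Rightarrow> real^'v^'v" where
  "laplacian adj = (\<chi> i j. (if i = j then real (card {k. adj i k}) else 0)
                           - (if adj i j then 1 else 0))"

definition gamma :: "('v::finite \<Rightarrow> 'v \<Rightarrow> bool) \<Rightarrow> real" where
  "gamma adj = (max_eig (laplacian adj) - second_eig (laplacian adj))
             / (max_eig (laplacian adj) + second_eig (laplacian adj))"

text \<open>C_i^T C_i for a row vector C_i.\<close>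
definition outer :: "real^'n \<Rightarrow> real^'n^'n" where
  "outer c = (\<chi> a b. c $ a * c $ b)"

definition lambda0 :: "('v::finite \<Rightarrow> real^'n) \<Rightarrow> nat \<Rightarrow> real" where
  "lambda0 C s = Min ((\<lambda>J. min_eig (\<Sum>i\<in>J. outer (C i)))
                       ` {J :: 'v set. card J = CARD('v) - s})"

definition opnorm :: "real^'n^'n \<Rightarrow> real" where
  "opnorm A = onorm (\<lambda>x. A *v x)"

text \<open>The quantities p_0, k^*, F, q_0 (nA stands for the induced norm of A, N for the number of nodes).\<close>
definition p0 :: "nat \<Rightarrow> real \<Rightarrow> real \<Rightarrow> real \<Rightarrow> nat \<Rightarrow> real" where
  "p0 N nA \<beta> \<gamma> L = sqrt (real N) * \<beta> * \<gamma> ^ L / (1 - nA * \<gamma> ^ L)"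

definition kstar :: "nat \<Rightarrow> real \<Rightarrow> real \<Rightarrow> real \<Rightarrow> nat \<Rightarrow> real \<Rightarrow> real \<Rightarrow> real \<Rightarrow> real" where
  "kstar N nA \<beta> \<gamma> L bw bv \<rho> = min 1 (\<beta> / (nA * (p0 N nA \<beta> \<gamma> L + \<rho>) + bw + bv))"

definition Ffun :: "nat \<Rightarrow> real \<Rightarrow> real \<Rightarrow> real \<Rightarrow> nat \<Rightarrow> real \<Rightarrow> real \<Rightarrow> real \<Rightarrow> real \<Rightarrow> real" where
  "Ffun N nA \<beta> \<gamma> L bw bv lam0 \<rho> = nA * (1 - kstar N nA \<beta> \<gamma> L bw bv \<rho> / real N * lam0)"

definition q0 :: "nat \<Rightarrow> nat \<Rightarrow> real \<Rightarrow> real \<Rightarrow> real \<Rightarrow> nat \<Rightarrow> real \<Rightarrow> real \<Rightarrow> real" where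
  "q0 N s nA \<beta> \<gamma> L bw bv = (real N - real s) / real N * (bw + bv + nA * p0 N nA \<beta> \<gamma> L)
                             + bw + real s * \<beta> / real N"

text \<open>The condition L > ln(nA) / ln(1/gamma); for gamma = 0, ln(1/gamma) = +infinity and the bound is 0.\<close>
definition L_ok :: "real \<Rightarrow> real \<Rightarrow> nat \<Rightarrow> bool" where
  "L_ok nA \<gamma> L = (if \<gamma> = 0 then real L > 0 else real L > ln nA / ln (1 / \<gamma>))"

end

theory Submission
  imports Defs
begin

definition symm :: "real^'n^'n \<Rightarrow> bool" where "symm M \<longleftrightarrow> (\<forall>i j. M$i$j = M$j$i)"

lemma symm_inner: assumes "symm M" shows "(M *v x) \<bullet> y = x \<bullet> (M *v y)"
proof -
  have "(M *v x) \<bullet> y = (\<Sum>i\<in>UNIV. \<Sum>j\<in>UNIV. M$i$j * x$j * y$i)"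
    by (simp add: inner_vec_def matrix_vector_mult_def sum_distrib_right)
  also have "\<dots> = (\<Sum>j\<in>UNIV. \<Sum>i\<in>UNIV. M$i$j * x$j * y$i)" by (rule sum.swap)
  also have "\<dots> = (\<Sum>j\<in>UNIV. \<Sum>i\<in>UNIV. x$j * (M$j$i * y$i))"
    using assms unfolding symm_def by (simp add: mult_ac)
  also have "\<dots> = x \<bullet> (M *v y)"
    by (simp add: inner_vec_def matrix_vector_mult_def sum_distrib_left)
  finally show ?thesis .
qed

lemma eig_finite: assumes "symm M" shows "finite {\<mu>. is_eig M \<mu>}"
proof -
  define E where "E = {\<mu>. is_eig M \<mu>}"
  define f where "f \<mu> = (SOME v. v \<noteq> 0 \<and> M *v v = \<mu> *\<^sub>R v)" for \<mu>
  have f: "f \<mu> \<noteq> 0 \<and> M *v f \<mu> = \<mu> *\<^sub>R f \<mu>" if "\<mu> \<in> E" for \<mu>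
    using that unfolding f_def E_def is_eig_def by (metis (mono_tags, lifting) someI_ex mem_Collect_eq)
  have inj: "inj_on f E"
  proof (rule inj_onI)
    fix a b assume "a \<in> E" "b \<in> E" "f a = f b"
    then have "a *\<^sub>R f a = b *\<^sub>R f a" "f a \<noteq> 0" using f by metis+
    then show "a = b" by (metis scaleR_cancel_right)
  qed
  have orth: "pairwise orthogonal (f ` E)"
  proof (rule pairwiseI)
    fix v w assume "v \<in> f ` E" "w \<in> f ` E" "v \<noteq> w"
    then obtain a b where ab: "a \<in> E" "b \<in> E" "v = f a" "w = f b" by auto
    then have "a \<noteq> b" using \<open>v \<noteq> w\<close> by auto
    have "a * (v \<bullet> w) = (M *v v) \<bullet> w" using f ab by simp
    also have "\<dots> = v \<bullet> (M *v w)" by (rule symm_inner[OF assms])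
    also have "\<dots> = b * (v \<bullet> w)" using f ab by simp
    finally have "(a - b) * (v \<bullet> w) = 0" by (simp add: algebra_simps)
    then show "orthogonal v w" using \<open>a \<noteq> b\<close> by (simp add: orthogonal_def)
  qed
  have "0 \<notin> f ` E" using f by auto
  then have "independent (f ` E)" using orth pairwise_orthogonal_independent by blast
  then have "finite (f ` E)" using independent_bound by blast
  then show ?thesis using inj finite_imageD E_def by blast
qed

lemma quad_ineq: fixes a K :: real assumes "\<forall>t. 2*t*a + t^2*K \<le> 0" "a \<ge> 0" shows "a = 0"
proof (rule ccontr)
  assume "a \<noteq> 0" hence ap: "a > 0" using assms by simp
  define t where "t = a / (\<bar>K\<bar> + 1)"
  have tp: "t > 0" using ap by (simp add: t_def add_pos_nonneg)
  have "2*t*a + t^2*K \<le> 0" using assms by blast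
  hence "t * (2*a + t*K) \<le> 0" by (simp add: power2_eq_square algebra_simps)
  hence h: "2*a + t*K \<le> 0" using tp by (simp add: mult_le_0_iff)
  have "t * \<bar>K\<bar> < a" using ap unfolding t_def by (simp add: field_simps)
  moreover have "t*(-\<bar>K\<bar>) \<le> t*K" using tp by (intro mult_left_mono) auto
  ultimately show False using h ap by linarith
qed

lemma rayleigh_eig:
  fixes M :: "real^'n^'n"
  assumes "symm M" "norm u = 1" "\<forall>x. x \<bullet> (M *v x) \<le> \<mu> * (norm x)^2" "u \<bullet> (M *v u) = \<mu>"
  shows "M *v u = \<mu> *\<^sub>R u"
proof -
  define z where "z = M *v u - \<mu> *\<^sub>R u"
  have uu: "u \<bullet> u = 1" using assms(2) by (simp add: dot_square_norm)
  have "2*t*(z \<bullet> z) + t^2*(z \<bullet> (M *v z) - \<mu> * (z \<bullet> z)) \<le> 0" for t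
  proof -
    have 1: "(u + t *\<^sub>R z) \<bullet> (M *v (u + t *\<^sub>R z)) = \<mu> + 2*t*(z \<bullet> (M *v u)) + t^2 * (z \<bullet> (M *v z))"
      using symm_inner[OF assms(1), of z u] assms(4)
      by (simp add: matrix_vector_right_distrib matrix_vector_mult_scaleR inner_add_left inner_add_right
           power2_eq_square algebra_simps inner_commute)
    have 2: "(norm (u + t *\<^sub>R z))^2 = 1 + 2*t*(u \<bullet> z) + t^2 * (z \<bullet> z)"
      unfolding power2_norm_eq_inner using uu by (simp add: inner_add_left inner_add_right power2_eq_square
          algebra_simps inner_commute)
    have "(u + t *\<^sub>R z) \<bullet> (M *v (u + t *\<^sub>R z)) \<le> \<mu> * (norm (u + t *\<^sub>R z))^2" using assms(3) by blast
    then have "\<mu> + 2*t*(z \<bullet> (M *v u)) + t^2 * (z \<bullet> (M *v z)) \<le> \<mu> * (1 + 2*t*(u \<bullet> z) + t^2 * (z \<bullet> z))"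
      using 1 2 by simp
    moreover have "z \<bullet> (M *v u) = z \<bullet> z + \<mu> * (u \<bullet> z)" unfolding z_def
      by (simp add: inner_diff_right inner_diff_left inner_commute algebra_simps)
    ultimately show ?thesis by (simp add: algebra_simps)
  qed
  then have "z \<bullet> z = 0" using quad_ineq[of "z \<bullet> z"] by (meson inner_ge_zero)
  then show ?thesis unfolding z_def by simp
qed


lemma rayleigh_max:
  fixes M :: "real^'n^'n"
  assumes "symm M"
  shows "\<exists>u. norm u = 1 \<and> M *v u = (u \<bullet> (M *v u)) *\<^sub>R u \<and> (\<forall>x. norm x = 1 \<longrightarrow> x \<bullet> (M *v x) \<le> u \<bullet> (M *v u))"
proof -
  have c: "continuous_on (sphere 0 1) (\<lambda>x::real^'n. x \<bullet> (M *v x))"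
    by (intro continuous_intros linear_continuous_on matrix_vector_mul_bounded_linear)
  have ne: "sphere (0::real^'n) 1 \<noteq> {}" using norm_axis_1[of undefined] by force
  obtain u where u: "u \<in> sphere 0 1" "\<forall>y\<in>sphere 0 1. y \<bullet> (M *v y) \<le> u \<bullet> (M *v u)"
    using continuous_attains_sup[OF compact_sphere ne c] by blast
  have nu: "norm u = 1" using u by simp
  have all: "\<forall>x. x \<bullet> (M *v x) \<le> (u \<bullet> (M *v u)) * (norm x)^2"
  proof
    fix x :: "real^'n"
    show "x \<bullet> (M *v x) \<le> (u \<bullet> (M *v u)) * (norm x)^2"
    proof (cases "x = 0")
      case True then show ?thesis by simp
    next
      case False
      define y where "y = (1 / norm x) *\<^sub>R x"
      have "y \<in> sphere 0 1" using False by (simp add: y_def)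
      then have "y \<bullet> (M *v y) \<le> u \<bullet> (M *v u)" using u by blast
      moreover have "y \<bullet> (M *v y) = (x \<bullet> (M *v x)) / (norm x)^2"
        by (simp add: y_def matrix_vector_mult_scaleR power2_eq_square)
      ultimately show ?thesis using False by (simp add: divide_le_eq)
    qed
  qed
  show ?thesis using rayleigh_eig[OF assms nu all refl] nu u by (auto simp: dist_norm)
qed

lemma lap_symm: assumes "\<forall>i j. adj i j \<longleftrightarrow> adj j i" shows "symm (laplacian adj)"
  using assms unfolding symm_def laplacian_def by auto

lemma sum_if_const: "(\<Sum>j\<in>UNIV. if P j then c else 0) = real (card {j::'v::finite. P j}) * c"
  by (simp add: sum.If_cases)

lemma lap_row: "(laplacian adj *v x) $ i = (\<Sum>j\<in>UNIV. if adj i j then x$i - x$j else 0)"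
proof -
  have "(laplacian adj *v x) $ i = (\<Sum>j\<in>UNIV. (if i = j then real (card {k. adj i k}) * x$j else 0)
        - (if adj i j then x$j else 0))"
    unfolding laplacian_def matrix_vector_mult_def vec_lambda_beta by (intro sum.cong) (auto simp: left_diff_distrib)
  also have "\<dots> = real (card {k. adj i k}) * x$i - (\<Sum>j\<in>UNIV. if adj i j then x$j else 0)"
    by (simp add: sum_subtractf)
  also have "\<dots> = (\<Sum>j\<in>UNIV. if adj i j then x$i - x$j else 0)"
  proof -
    have "(\<Sum>j\<in>UNIV. if adj i j then x$i - x$j else 0) = (\<Sum>j\<in>UNIV. (if adj i j then x$i else 0) - (if adj i j then x$j else 0))"
      by (intro sum.cong) auto
    then show ?thesis by (simp add: sum_subtractf sum_if_const)
  qed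
  finally show ?thesis .
qed


lemma lap_quad: assumes sym: "\<forall>i j. adj i j \<longleftrightarrow> adj j i"
  shows "2 * (x \<bullet> (laplacian adj *v x)) = (\<Sum>i\<in>UNIV. \<Sum>j\<in>UNIV. if adj i j then (x$i - x$j)^2 else 0)"
proof -
  define S where "S = (\<Sum>i\<in>UNIV. \<Sum>j\<in>UNIV. if adj i j then x$i * (x$i - x$j) else (0::real))"
  have 1: "x \<bullet> (laplacian adj *v x) = S"
    unfolding S_def inner_vec_def lap_row inner_real_def sum_distrib_left
    by (intro sum.cong) auto
  have "S = (\<Sum>j\<in>UNIV. \<Sum>i\<in>UNIV. if adj i j then x$i * (x$i - x$j) else (0::real))"
    unfolding S_def by (rule sum.swap)
  also have "\<dots> = (\<Sum>i\<in>UNIV. \<Sum>j\<in>UNIV. if adj i j then x$j * (x$j - x$i) else (0::real))"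
    using sym by (intro sum.cong) auto
  finally have 2: "S = \<dots>" .
  have "2 * S = S + (\<Sum>i\<in>UNIV. \<Sum>j\<in>UNIV. if adj i j then x$j * (x$j - x$i) else (0::real))"
    using 2 by simp
  also have "\<dots> = (\<Sum>i\<in>UNIV. \<Sum>j\<in>UNIV. if adj i j then (x$i - x$j)^2 else 0)"
    unfolding S_def sum.distrib[symmetric] by (intro sum.cong) (auto simp: power2_eq_square algebra_simps)
  finally show ?thesis using 1 by simp
qed

lemma lap_psd: assumes sym: "\<forall>i j. adj i j \<longleftrightarrow> adj j i"
  shows "x \<bullet> (laplacian adj *v x) \<ge> 0"
proof -
  have "(\<Sum>i\<in>UNIV. \<Sum>j\<in>UNIV. if adj i j then (x$i - x$j)^2 else 0) \<ge> (0::real)"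
    by (intro sum_nonneg) auto
  then show ?thesis using lap_quad[OF sym, of x] by linarith
qed

lemma lap_kernel: assumes sym: "\<forall>i j. adj i j \<longleftrightarrow> adj j i" and conn: "\<forall>i j. adj\<^sup>*\<^sup>* i j"
  and v: "laplacian adj *v v = 0"
  shows "v$i = v$j"
proof -
  have "(\<Sum>i\<in>UNIV. \<Sum>j\<in>UNIV. if adj i j then (v$i - v$j)^2 else 0) = (0::real)"
    using lap_quad[OF sym, of v] v by simp
  then have h: "\<forall>i. (\<Sum>j\<in>UNIV. if adj i j then (v$i - v$j)^2 else 0) = (0::real)"
    by (subst (asm) sum_nonneg_eq_0_iff) (auto intro: sum_nonneg)
  have e: "adj a b \<Longrightarrow> v$a = v$b" for a b
  proof -
    assume "adj a b"
    have "\<forall>j. (if adj a j then (v$a - v$j)^2 else 0) = (0::real)"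
      using h[rule_format, of a] by (subst (asm) sum_nonneg_eq_0_iff) auto
    then show ?thesis using \<open>adj a b\<close> by (metis power_eq_0_iff right_minus_eq zero_neq_numeral)
  qed
  have "adj\<^sup>*\<^sup>* i j" using conn by blast
  then show ?thesis by (induction rule: rtranclp_induct) (auto dest: e)
qed


lemma gamma_bounds:
  fixes adj :: "'v::finite \<Rightarrow> 'v \<Rightarrow> bool"
  assumes sym: "\<forall>i j. adj i j \<longleftrightarrow> adj j i"
    and noloop: "\<forall>i. \<not> adj i i"
    and conn: "\<forall>i j. adj\<^sup>*\<^sup>* i j"
    and N2: "CARD('v) \<ge> 2"
  shows "0 \<le> gamma adj \<and> gamma adj < 1"
proof -
  define L where "L = laplacian adj"
  define E where "E = {\<mu>. is_eig L \<mu>}"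
  have sL: "symm L" using lap_symm[OF sym] L_def by simp
  have fin: "finite E" using eig_finite[OF sL] E_def by simp
  define ones :: "real^'v" where "ones = (\<chi> i. 1)"
  have one0: "ones \<noteq> 0" unfolding ones_def by (simp add: vec_eq_iff)
  have o1: "ones $ i = 1" for i unfolding ones_def by simp
  have "(L *v ones) $ i = 0" for i unfolding L_def lap_row o1 by (rule sum.neutral) simp
  then have L1: "L *v ones = 0" by (simp add: vec_eq_iff)
  have 0: "0 \<in> E" unfolding E_def is_eig_def using one0 L1 by auto
  have nn: "\<mu> \<ge> 0" if mE: "\<mu> \<in> E" for \<mu>
  proof -
    obtain v where v: "v \<noteq> 0" "L *v v = \<mu> *\<^sub>R v" using mE unfolding E_def is_eig_def by auto
    have "\<mu> * (v \<bullet> v) = v \<bullet> (L *v v)" using v by simp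
    also have "\<dots> \<ge> 0" unfolding L_def by (rule lap_psd[OF sym])
    finally have "0 \<le> \<mu> * (v \<bullet> v)" . moreover have "v \<bullet> v > 0" using v(1) by simp ultimately show ?thesis by (simp add: zero_le_mult_iff)
  qed
  have mn: "min_eig L = 0" unfolding min_eig_def E_def[symmetric]
    using fin 0 nn by (intro Min_eqI) auto
  have sub: "{v. L *v v = 0 *\<^sub>R v} \<subseteq> span {ones}"
  proof
    fix v assume "v \<in> {v. L *v v = 0 *\<^sub>R v}"
    then have "L *v v = 0" by simp
    then have "\<forall>i j. v$i = v$j" using lap_kernel[OF sym conn] L_def by blast
    then have "v = (v$undefined) *\<^sub>R ones" by (simp add: vec_eq_iff o1)
    then show "v \<in> span {ones}" by (metis span_base span_scale singletonI)
  qed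
  have em: "eig_mult L 0 \<le> 1" unfolding eig_mult_def using dim_le_card[OF sub] by simp
  have "\<not> (\<forall>a b::'v. a = b)"
  proof
    assume h: "\<forall>a b::'v. a = b"
    then have h2: "(UNIV::'v set) = {undefined}" by auto
    have "CARD('v) = 1" unfolding h2 by simp
    with N2 show False by simp
  qed
  then obtain a b :: 'v where "a \<noteq> b" by blast
  moreover have "adj\<^sup>*\<^sup>* a b" using conn by blast
  ultimately obtain k where "adj a k" by (metis converse_rtranclpE)
  then have dpos: "card {k. adj a k} > 0" by (auto simp: card_gt_0_iff)
  obtain u where u: "norm u = 1" "L *v u = (u \<bullet> (L *v u)) *\<^sub>R u"
      "\<forall>x. norm x = 1 \<longrightarrow> x \<bullet> (L *v x) \<le> u \<bullet> (L *v u)"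
    using rayleigh_max[OF sL] by blast
  have "(\<Sum>j\<in>UNIV. if adj a j then axis a (1::real) $ a - axis a 1 $ j else 0) = (\<Sum>j\<in>UNIV. if adj a j then 1 else 0)"
    using noloop by (intro sum.cong) (auto simp: axis_def)
  then have "(L *v axis a 1) $ a = real (card {k. adj a k})" unfolding L_def lap_row sum_if_const by simp
  then have "axis a 1 \<bullet> (L *v axis a 1) = real (card {k. adj a k})" by (simp add: inner_axis')
  moreover have "axis a 1 \<bullet> (L *v axis a 1) \<le> u \<bullet> (L *v u)" by (rule u(3)[rule_format, OF norm_axis_1])
  moreover have "real (card {k. adj a k}) > 0" using dpos by simp
  ultimately have upos: "u \<bullet> (L *v u) > 0" by linarith
  have "u \<noteq> 0" using u(1) by auto
  then have uE: "u \<bullet> (L *v u) \<in> E" unfolding E_def is_eig_def using u(2) by blast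
  define m2 where "m2 = Min (E - {0})"
  have "\<not> (eig_mult L (min_eig L) \<ge> 2)" using em mn by simp
  then have sec: "second_eig L = m2" unfolding second_eig_def m2_def E_def mn by simp
  have m2E: "m2 \<in> E - {0}" unfolding m2_def using fin uE upos by (intro Min_in) auto
  then have m2p: "m2 > 0" using nn by force
  have mx: "max_eig L \<ge> m2" unfolding max_eig_def E_def[symmetric] using fin m2E by (intro Max_ge) auto
  define M where "M = max_eig L"
  have g: "gamma adj = (M - m2) / (M + m2)" unfolding gamma_def L_def[symmetric] sec M_def ..
  have "M + m2 > 0" "M - m2 \<ge> 0" "M - m2 < M + m2" using m2p mx M_def by auto
  then show ?thesis unfolding g by (simp add: divide_less_eq)
qed


lemma opnorm_scal: assumes "a \<ge> 0" shows "opnorm ((a *\<^sub>R mat 1) :: real^'n^'n) = a"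
proof -
  have "(\<lambda>x::real^'n. (a *\<^sub>R mat 1) *v x) = (\<lambda>x. a *\<^sub>R x)"
    by (simp add: scaleR_matrix_vector_assoc[symmetric])
  then have "opnorm ((a *\<^sub>R mat 1) :: real^'n^'n) = onorm (\<lambda>x::real^'n. a *\<^sub>R x)"
    unfolding opnorm_def by simp
  also have "\<dots> = \<bar>a\<bar> * onorm (\<lambda>x::real^'n. x)" by (rule onorm_scaleR[OF bounded_linear_ident])
  also have "\<dots> = a" using assms by (simp add: onorm_id)
  finally show ?thesis .
qed

lemma Lok_prod: assumes "1 \<le> a" "0 \<le> \<gamma>" "\<gamma> < 1" "L_ok a \<gamma> L" shows "a * \<gamma>^L < 1"
proof (cases "\<gamma> = 0")
  case True
  then have "L > 0" using assms(4) unfolding L_ok_def by simp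
  then show ?thesis using True by (simp add: zero_power)
next
  case False
  then have gp: "\<gamma> > 0" using assms by simp
  have lg: "ln \<gamma> < 0" using gp assms by simp
  have "ln (1/\<gamma>) = - ln \<gamma>" using gp by (simp add: ln_div)
  then have "real L > ln a / (- ln \<gamma>)" using assms(4) False unfolding L_ok_def by simp
  then have "(ln a / (- ln \<gamma>)) * (- ln \<gamma>) < real L * (- ln \<gamma>)" using lg
    by (intro mult_strict_right_mono) auto
  then have "real L * (- ln \<gamma>) > ln a" using lg by simp
  then have "ln a + real L * ln \<gamma> < 0" by simp
  moreover have "ln (a * \<gamma>^L) = ln a + real L * ln \<gamma>" using gp assms(1) by (simp add: ln_mult ln_realpow)
  ultimately have "ln (a * \<gamma>^L) < 0" by simp
  moreover have "a * \<gamma>^L > 0" using gp assms(1) by simp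
  ultimately show ?thesis by simp
qed

lemma Lok_exists: assumes "0 \<le> \<gamma>" "\<gamma> < 1" "\<delta> > 0" shows "\<exists>L. L_ok a \<gamma> L \<and> \<gamma>^L \<le> \<delta>"
proof -
  have "(\<lambda>n. \<gamma>^n) \<longlonglongrightarrow> 0" by (rule LIMSEQ_power_zero) (use assms in simp)
  then have "eventually (\<lambda>n. \<gamma>^n < \<delta>) sequentially" by (rule order_tendstoD) (rule assms)
  then obtain N0 where N0: "\<forall>n\<ge>N0. \<gamma>^n < \<delta>" by (auto simp: eventually_sequentially)
  define X where "X = ln a / ln (1/\<gamma>)"
  define L where "L = max N0 (nat \<lceil>X\<rceil> + 1)"
  have "real L \<ge> real (nat \<lceil>X\<rceil>) + 1" unfolding L_def by simp
  moreover have "X \<le> real (nat \<lceil>X\<rceil>)" by (rule real_nat_ceiling_ge)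
  ultimately have "real L > X" "real L > 0" by linarith+
  then have "L_ok a \<gamma> L" unfolding L_ok_def X_def by simp
  moreover have "\<gamma>^L \<le> \<delta>" using N0 unfolding L_def by (simp add: less_imp_le)
  ultimately show ?thesis by blast
qed

lemma dir_fail:
  fixes N s :: nat and a \<beta> \<gamma> \<eta> bw bv lam :: real
  assumes a: "a > 1" and g0: "0 \<le> \<gamma>^L" and ag: "a * \<gamma>^L < 1" and b: "\<beta> > 0" and e: "\<eta> > 0"
    and N: "N \<ge> 2" and s: "s \<le> N" and bw: "bw \<ge> 0" and bv: "bv \<ge> 0" and lam: "lam \<le> real s"
  shows "\<eta> * (1 - Ffun N a \<beta> \<gamma> L bw bv lam \<eta>) < q0 N s a \<beta> \<gamma> L bw bv"
proof -
  define P where "P = p0 N a \<beta> \<gamma> L"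
  have P0: "P \<ge> 0" unfolding P_def p0_def using ag g0 b by (intro divide_nonneg_pos) auto
  define D where "D = a*(P+\<eta>)+bw+bv"
  have aeta: "a*\<eta> > 0" using a e by simp
  have Dg: "D \<ge> a*\<eta>" unfolding D_def using a P0 bw bv by (simp add: algebra_simps)
  define k where "k = kstar N a \<beta> \<gamma> L bw bv \<eta>"
  have k: "k = min 1 (\<beta>/D)" unfolding k_def kstar_def P_def D_def ..
  have Dp: "D > 0" using Dg aeta by linarith
  have k0: "k \<ge> 0" using k b Dp by simp
  have "k * (a*\<eta>) \<le> (\<beta>/D) * (a*\<eta>)" using k aeta by (intro mult_right_mono) auto
  also have "\<dots> \<le> (\<beta>/D) * D" using Dg b Dp by (intro mult_left_mono) auto
  also have "\<dots> = \<beta>" using Dp by simp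
  finally have kb: "k * (a*\<eta>) \<le> \<beta>" .
  have kl: "k * (a*\<eta>) * lam \<le> \<beta> * real s"
  proof (cases "lam \<ge> 0")
    case True
    have "k * (a*\<eta>) * lam \<le> \<beta> * lam" using kb True by (rule mult_right_mono)
    also have "\<dots> \<le> \<beta> * real s" using lam b by simp
    finally show ?thesis .
  next
    case False
    have "k * (a*\<eta>) * lam \<le> 0" using False k0 aeta by (intro mult_nonneg_nonpos) auto
    also have "0 \<le> \<beta> * real s" using b by simp
    finally show ?thesis .
  qed
  have Np: "real N > 0" using N by simp
  have F: "\<eta> * (1 - Ffun N a \<beta> \<gamma> L bw bv lam \<eta>) = \<eta>*(1-a) + k*(a*\<eta>)*lam / real N"
    unfolding Ffun_def k_def[symmetric] using Np by (simp add: field_simps)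
  have q: "q0 N s a \<beta> \<gamma> L bw bv = (real N - real s)/real N*(bw+bv+a*P) + bw + real s*\<beta>/real N"
    unfolding q0_def P_def ..
  have "(real N - real s)/real N*(bw+bv+a*P) \<ge> 0" using s Np bw bv P0 a by (intro mult_nonneg_nonneg) auto
  moreover have "k*(a*\<eta>)*lam / real N \<le> real s*\<beta>/real N" using kl Np by (simp add: divide_right_mono mult.commute)
  moreover have "\<eta>*(1-a) < 0" using a e by (simp add: mult_pos_neg)
  ultimately show ?thesis unfolding F q using bw by linarith
qed


lemma dir_ok:
  fixes N s :: nat and a \<gamma> bw bv lam t c :: real
  assumes a1: "1 \<le> a" and aeps: "a - 1 < (lam - real s)/real N" and lam: "lam > real s"
    and N: "N \<ge> 2" and s: "s \<le> N" and bw: "bw \<ge> 0" and bv: "bv \<ge> 0"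
    and c_def: "c = a*(lam - real s)/real N - (a - 1)" and t_def: "t = c / (2*a)"
    and g0: "0 \<le> \<gamma>^L" and ag: "a*\<gamma>^L \<le> 1/2" and sg: "sqrt (real N) * \<gamma>^L \<le> t/(2*a*(1+t))"
  shows "\<exists>\<beta>>0. \<exists>\<eta>>0. \<eta> * (1 - Ffun N a \<beta> \<gamma> L bw bv lam \<eta>) \<ge> q0 N s a \<beta> \<gamma> L bw bv"
proof -
  have Np: "real N > 0" using N by simp
  define d where "d = (lam - real s)/real N"
  have dp: "d > 0" unfolding d_def using lam Np by simp
  have "a * d \<ge> d" using a1 dp by simp
  moreover have "c = a*d - (a-1)" unfolding c_def d_def by simp
  ultimately have cp: "c > 0" using aeps d_def by linarith
  have ap: "a > 0" using a1 by simp
  have tp: "t > 0" unfolding t_def using cp ap by simp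
  have ta: "t * a = c/2" unfolding t_def using ap by simp
  define g where "g = \<gamma>^L"
  define c1 where "c1 = sqrt (real N) * g / (1 - a*g)"
  have omg: "1 - a*g \<ge> 1/2" using ag g_def by simp
  have c10: "c1 \<ge> 0" unfolding c1_def using omg g0 g_def by simp
  have "c1 \<le> sqrt (real N) * g / (1/2)" unfolding c1_def using omg g0 g_def
    by (intro divide_left_mono) auto
  also have "\<dots> = 2 * (sqrt (real N) * \<gamma>^L)" using g_def by simp
  also have "\<dots> \<le> t/(a*(1+t))"
  proof -
    have eq: "2 * (t/(2*a*(1+t))) = t/(a*(1+t))" by simp
    have h: "2 * (sqrt (real N) * \<gamma>^L) \<le> 2 * (t/(2*a*(1+t)))" using sg by (rule mult_left_mono) simp
    show ?thesis using h unfolding eq .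
  qed
  finally have c1b: "c1 \<le> t/(a*(1+t))" .
  define P where "P = a*c1"
  have P0: "P \<ge> 0" unfolding P_def using ap c10 by simp
  have "P \<le> a * (t/(a*(1+t)))" unfolding P_def using c1b ap by (intro mult_left_mono) auto
  then have Pb: "P \<le> t/(1+t)" using ap by simp
  then have Pt: "P * (1+t) \<le> t" using tp by (simp add: pos_le_divide_eq)
  moreover have "t < 1 * (1+t)" by simp
  ultimately have "P * (1+t) < 1 * (1+t)" by (rule le_less_trans)
  then have P1: "P < 1" by (rule mult_right_less_imp_less) (use tp in simp)
  define K0 where "K0 = bw + bv"
  define \<eta> where "\<eta> = 2*(2*bw+bv+t*K0)/c + 1"
  have K00: "K0 \<ge> 0" unfolding K0_def using bw bv by simp
  have ep: "\<eta> > 0" unfolding \<eta>_def using cp bw bv tp K00 by (simp add: add_nonneg_pos)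
  define \<beta> where "\<beta> = (a*\<eta>+K0)/(1-P)"
  have bp: "\<beta> > 0" unfolding \<beta>_def using P1 ap ep K00 by (simp add: add_pos_nonneg)
  have beq: "\<beta> = P*\<beta> + a*\<eta> + K0" unfolding \<beta>_def using P1 by (simp add: field_simps)
  have p0eq: "p0 N a \<beta> \<gamma> L = c1 * \<beta>" unfolding p0_def c1_def g_def by simp
  have Deq: "a * (p0 N a \<beta> \<gamma> L + \<eta>) + bw + bv = \<beta>" unfolding p0eq using beq
    unfolding P_def K0_def by (simp add: algebra_simps)
  have k1: "kstar N a \<beta> \<gamma> L bw bv \<eta> = 1" unfolding kstar_def Deq using bp by simp
  have LHS: "\<eta> * (1 - Ffun N a \<beta> \<gamma> L bw bv lam \<eta>) = \<eta>*c + a*\<eta>*real s/real N"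
    unfolding Ffun_def k1 c_def using Np by (simp add: field_simps)
  have "q0 N s a \<beta> \<gamma> L bw bv = (real N - real s)/real N * (K0 + P*\<beta>) + bw + real s*(P*\<beta> + a*\<eta> + K0)/real N"
    unfolding q0_def p0eq P_def K0_def using beq[symmetric] unfolding P_def K0_def by (simp add: algebra_simps)
  also have "\<dots> = K0 + P*\<beta> + bw + a*\<eta>*real s/real N"
    using Np by (simp add: field_simps)
  finally have RHS: "q0 N s a \<beta> \<gamma> L bw bv = K0 + P*\<beta> + bw + a*\<eta>*real s/real N" .
  have "P*\<beta> = P/(1-P) * (a*\<eta>+K0)" unfolding \<beta>_def by simp
  also have "\<dots> \<le> t * (a*\<eta>+K0)"
  proof (rule mult_right_mono)
    show "P/(1-P) \<le> t" using Pt P1 by (simp add: divide_le_eq algebra_simps)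
    show "0 \<le> a*\<eta>+K0" using ap ep K00 by simp
  qed
  also have "\<dots> = c/2*\<eta> + t*K0" using ta by (simp add: algebra_simps)
  finally have Pbeta: "P*\<beta> \<le> c/2*\<eta> + t*K0" .
  have "c/2*\<eta> = (2*bw+bv+t*K0) + c/2" unfolding \<eta>_def using cp by (simp add: field_simps)
  moreover have "\<eta>*c = 2*(c/2*\<eta>)" by simp
  ultimately have "\<eta>*c \<ge> K0 + P*\<beta> + bw" using Pbeta cp K0_def by linarith
  then have "\<eta> * (1 - Ffun N a \<beta> \<gamma> L bw bv lam \<eta>) \<ge> q0 N s a \<beta> \<gamma> L bw bv"
    unfolding LHS RHS by simp
  then show ?thesis using bp ep by blast
qed


theorem theorem2:
  fixes adj :: "'v::finite \<Rightarrow> 'v \<Rightarrow> bool"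
    and C :: "'v \<Rightarrow> real^'n"
    and s :: nat and bw bv :: real
  assumes sym: "\<forall>i j. adj i j \<longleftrightarrow> adj j i"
    and noloop: "\<forall>i. \<not> adj i i"
    and conn: "\<forall>i j. adj\<^sup>*\<^sup>* i j"
    and N2: "CARD('v) \<ge> 2"
    and Cnorm: "\<forall>i. norm (C i) = 1"
    and sN: "s \<le> CARD('v)"
    and bw: "bw \<ge> 0" and bv: "bv \<ge> 0"
  shows "(\<exists>\<epsilon>>0. \<forall>A :: real^'n^'n. 1 \<le> opnorm A \<and> opnorm A < 1 + \<epsilon> \<longrightarrow>
            (\<exists>\<beta>>0. \<exists>\<eta>0>0. \<exists>L::nat. L_ok (opnorm A) (gamma adj) L \<and>
               \<eta>0 * (1 - Ffun CARD('v) (opnorm A) \<beta> (gamma adj) L bw bv (lambda0 C s) \<eta>0)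
                 \<ge> q0 CARD('v) s (opnorm A) \<beta> (gamma adj) L bw bv))
         \<longleftrightarrow> lambda0 C s > real s"
proof -
  define \<gamma> where "\<gamma> = gamma adj"
  define lam where "lam = lambda0 C s"
  define N where "N = CARD('v)"
  have gb: "0 \<le> \<gamma>" "\<gamma> < 1" using gamma_bounds[OF sym noloop conn N2] \<gamma>_def by auto
  have N2': "N \<ge> 2" using N2 N_def by simp
  have sN': "s \<le> N" using sN N_def by simp
  have Np: "real N > 0" using N2' by simp
  show ?thesis unfolding \<gamma>_def[symmetric] lam_def[symmetric] N_def[symmetric]
  proof
    assume "\<exists>\<epsilon>>0. \<forall>A :: real^'n^'n. 1 \<le> opnorm A \<and> opnorm A < 1 + \<epsilon> \<longrightarrow>
            (\<exists>\<beta>>0. \<exists>\<eta>0>0. \<exists>L::nat. L_ok (opnorm A) \<gamma> L \<and>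
               \<eta>0 * (1 - Ffun N (opnorm A) \<beta> \<gamma> L bw bv lam \<eta>0) \<ge> q0 N s (opnorm A) \<beta> \<gamma> L bw bv)"
    then obtain \<epsilon> where ep: "\<epsilon> > 0" and H: "\<forall>A :: real^'n^'n. 1 \<le> opnorm A \<and> opnorm A < 1 + \<epsilon> \<longrightarrow>
            (\<exists>\<beta>>0. \<exists>\<eta>0>0. \<exists>L::nat. L_ok (opnorm A) \<gamma> L \<and>
               \<eta>0 * (1 - Ffun N (opnorm A) \<beta> \<gamma> L bw bv lam \<eta>0) \<ge> q0 N s (opnorm A) \<beta> \<gamma> L bw bv)"
      by blast
    define a where "a = 1 + \<epsilon>/2"
    have a1: "a > 1" "a < 1 + \<epsilon>" using ep a_def by auto
    have on: "opnorm ((a *\<^sub>R mat 1) :: real^'n^'n) = a" using a1 by (intro opnorm_scal) simp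
    obtain \<beta> \<eta> L where b: "\<beta> > 0" and e: "\<eta> > 0" and Lok: "L_ok a \<gamma> L"
      and ineq: "\<eta> * (1 - Ffun N a \<beta> \<gamma> L bw bv lam \<eta>) \<ge> q0 N s a \<beta> \<gamma> L bw bv"
      using H[rule_format, of "(a *\<^sub>R mat 1) :: real^'n^'n"] unfolding on using a1 by auto
    have ag: "a * \<gamma>^L < 1" using Lok_prod[OF _ gb Lok] a1 by simp
    have g0: "0 \<le> \<gamma>^L" using gb by simp
    show "lam > real s"
    proof (rule ccontr)
      assume "\<not> lam > real s"
      then have "lam \<le> real s" by simp
      from dir_fail[OF a1(1) g0 ag b e N2' sN' bw bv this] ineq show False by simp
    qed
  next
    assume lam: "lam > real s"
    define \<epsilon> where "\<epsilon> = (lam - real s)/real N"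
    have ep: "\<epsilon> > 0" unfolding \<epsilon>_def using lam Np by simp
    show "\<exists>\<epsilon>>0. \<forall>A :: real^'n^'n. 1 \<le> opnorm A \<and> opnorm A < 1 + \<epsilon> \<longrightarrow>
            (\<exists>\<beta>>0. \<exists>\<eta>0>0. \<exists>L::nat. L_ok (opnorm A) \<gamma> L \<and>
               \<eta>0 * (1 - Ffun N (opnorm A) \<beta> \<gamma> L bw bv lam \<eta>0) \<ge> q0 N s (opnorm A) \<beta> \<gamma> L bw bv)"
    proof -
     have "\<forall>A :: real^'n^'n. 1 \<le> opnorm A \<and> opnorm A < 1 + \<epsilon> \<longrightarrow>
            (\<exists>\<beta>>0. \<exists>\<eta>0>0. \<exists>L::nat. L_ok (opnorm A) \<gamma> L \<and>
               \<eta>0 * (1 - Ffun N (opnorm A) \<beta> \<gamma> L bw bv lam \<eta>0) \<ge> q0 N s (opnorm A) \<beta> \<gamma> L bw bv)"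
     proof (intro allI impI)
      fix A :: "real^'n^'n"
      assume "1 \<le> opnorm A \<and> opnorm A < 1 + \<epsilon>"
      then have a1: "1 \<le> opnorm A" and aeps: "opnorm A - 1 < (lam - real s)/real N" using \<epsilon>_def by auto
      define a where "a = opnorm A"
      have ap: "a > 0" using a1 a_def by simp
      define c where "c = a*(lam - real s)/real N - (a - 1)"
      define t where "t = c / (2*a)"
      have "(lam - real s)/real N > 0" using lam Np by simp
      then have "1 * ((lam - real s)/real N) \<le> a * ((lam - real s)/real N)" using a1 a_def
        by (intro mult_right_mono) auto
      then have "a * ((lam - real s)/real N) \<ge> (lam - real s)/real N" by simp
      moreover have "c = a * ((lam - real s)/real N) - (a-1)" unfolding c_def by simp
      ultimately have cp: "c > 0" using aeps a_def by linarith
      have tp: "t > 0" unfolding t_def using cp ap by simp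
      define \<delta> where "\<delta> = min (1/(2*a)) (t/(2*a*(1+t)) / sqrt (real N))"
      have dp: "\<delta> > 0" unfolding \<delta>_def using ap tp Np by simp
      obtain L where Lok: "L_ok a \<gamma> L" and gL: "\<gamma>^L \<le> \<delta>" using Lok_exists[OF gb dp] by blast
      have g0: "0 \<le> \<gamma>^L" using gb by simp
      have "a * \<gamma>^L \<le> a * (1/(2*a))" using gL ap unfolding \<delta>_def by (intro mult_left_mono) auto
      then have ag: "a*\<gamma>^L \<le> 1/2" using ap by simp
      have sqp: "sqrt (real N) > 0" using Np by simp
      have "sqrt (real N) * \<gamma>^L \<le> sqrt (real N) * (t/(2*a*(1+t)) / sqrt (real N))"
        using gL sqp unfolding \<delta>_def by (intro mult_left_mono) auto
      then have sg: "sqrt (real N) * \<gamma>^L \<le> t/(2*a*(1+t))" using sqp by simp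
      obtain \<beta> \<eta> where "\<beta> > 0" "\<eta> > 0" "\<eta> * (1 - Ffun N a \<beta> \<gamma> L bw bv lam \<eta>) \<ge> q0 N s a \<beta> \<gamma> L bw bv"
        using dir_ok[OF a1[folded a_def] aeps[folded a_def] lam N2' sN' bw bv c_def t_def g0 ag sg] by blast
      then have "\<exists>\<beta>>0. \<exists>\<eta>0>0. \<exists>L::nat. L_ok a \<gamma> L \<and>
               \<eta>0 * (1 - Ffun N a \<beta> \<gamma> L bw bv lam \<eta>0) \<ge> q0 N s a \<beta> \<gamma> L bw bv"
        using Lok by blast
      then show "\<exists>\<beta>>0. \<exists>\<eta>0>0. \<exists>L::nat. L_ok (opnorm A) \<gamma> L \<and>
               \<eta>0 * (1 - Ffun N (opnorm A) \<beta> \<gamma> L bw bv lam \<eta>0) \<ge> q0 N s (opnorm A) \<beta> \<gamma> L bw bv"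
        unfolding a_def .
     qed
     then show ?thesis using ep by blast
    qed
  qed
qed

end
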